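(* For $r\ge1$ and a real random variable $X$ define $\nu_r(X)=\frac{r^{1/r}}{2}\left(\int_0^\infty\varepsilon^{r-1}(1-Q_X(\varepsilon))\,d\varepsilon\right)^{1/r}$. Then: (i) $\nu_r(X)$ depends only on the distribution of $X$; (ii) $\nu_r(X+k)=\nu_r(X)$ for all constants $k$; (iii) $\nu_r(\lambda X)=|\lambda|\,\nu_r(X)$ for all $\lambda\in\mathbb{R}$; (iv) $\nu_r(X)\ge0$, with $\nu_r(X)=0$ if $X$ is degenerate; (v) if $X\le_{wd}Y$ then $\nu_r(X)\le\nu_r(Y)$; consequently $\nu_r(X)\le\nu_r(Y)$ also whenever $X\le_{disp}Y$ (i.e. $F^{-1}(v)-F^{-1}(u)\le G^{-1}(v)-G^{-1}(u)$ for all $0<u<v<1$, $X\sim F$, $Y\sim G$). Moreover, if $X$ takes values in $\mathbb{N}_0$, then $\nu_r(X)=\frac12\left(\sum_{k=0}^\infty\big((k+1)^r-k^r\big)\big(1-Q_X(k)\big)\right)^{1/r}$, where $Q_X(0):=\max_k\Pr(X=k)$.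
   Context: For a real random variable $X$, its Lévy concentration function is $Q_X(\varepsilon)=\sup_{x_0\in\mathbb{R}}\Pr\{X\in[x_0,x_0+\varepsilon]\}$, $\varepsilon>0$. For random variables $X,Y$, write $X\le_{wd}Y$ if $Q_X(\varepsilon)\ge Q_Y(\varepsilon)$ for all $\varepsilon>0$. $F^{-1}(u)=\inf\{x:F(x)\ge u\}$. *)

theory Defs
  imports "HOL-Probability.Probability"
begin

definition conc :: "'a measure \<Rightarrow> ('a \<Rightarrow> real) \<Rightarrow> real \<Rightarrow> real" where
  "conc M X \<epsilon> = (SUP x0. measure M {\<omega> \<in> space M. X \<omega> \<in> {x0..x0 + \<epsilon>}})"

definition wd_le :: "'a measure \<Rightarrow> ('a \<Rightarrow> real) \<Rightarrow> 'b measure \<Rightarrow> ('b \<Rightarrow> real) \<Rightarrow> bool" where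
  "wd_le M X N Y \<longleftrightarrow> (\<forall>\<epsilon>>0. conc N Y \<epsilon> \<le> conc M X \<epsilon>)"

definition quantile :: "(real \<Rightarrow> real) \<Rightarrow> real \<Rightarrow> real" where
  "quantile F u = Inf {x. u \<le> F x}"

definition disp_le :: "'a measure \<Rightarrow> ('a \<Rightarrow> real) \<Rightarrow> 'b measure \<Rightarrow> ('b \<Rightarrow> real) \<Rightarrow> bool" where
  "disp_le M X N Y \<longleftrightarrow>
     (\<forall>u v. 0 < u \<and> u < v \<and> v < 1 \<longrightarrow>
        quantile (cdf (distr M borel X)) v - quantile (cdf (distr M borel X)) u
        \<le> quantile (cdf (distr N borel Y)) v - quantile (cdf (distr N borel Y)) u)"

definition enn_root :: "real \<Rightarrow> ennreal \<Rightarrow> ennreal" where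
  "enn_root r I = (if I = \<infinity> then \<infinity> else ennreal (enn2real I powr (1 / r)))"

definition nu :: "real \<Rightarrow> 'a measure \<Rightarrow> ('a \<Rightarrow> real) \<Rightarrow> ennreal" where
  "nu r M X = ennreal (r powr (1 / r) / 2) *
     enn_root r (\<integral>\<^sup>+ \<epsilon>. indicator {0<..} \<epsilon> * ennreal (\<epsilon> powr (r - 1) * (1 - conc M X \<epsilon>)) \<partial>lborel)"

end

theory Submission
  imports Defs
begin


lemma conc_distr:
  assumes "X \<in> borel_measurable M"
  shows "conc M X e = (SUP x0. measure (distr M borel X) {x0..x0+e})"
  unfolding conc_def using assms
  by (simp add: measure_distr vimage_def Int_def conj_commute)

lemma SUP_surj:
  fixes g :: "real \<Rightarrow> real"
  assumes "surj h" shows "(SUP x. g (h x)) = (SUP x. g x)"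
proof -
  have "(\<lambda>x. g (h x)) ` UNIV = g ` UNIV" using assms by (metis image_image)
  then show ?thesis by simp
qed

lemma evX: assumes "X \<in> borel_measurable M" "S \<in> sets borel"
  shows "{\<omega> \<in> space M. X \<omega> \<in> S} \<in> sets M"
proof -
  have "{\<omega> \<in> space M. X \<omega> \<in> S} = X -` S \<inter> space M" by auto
  then show ?thesis using measurable_sets[OF assms] by simp
qed

context prob_space begin
lemma conc_bdd: "bdd_above (range (\<lambda>x0. measure M {\<omega> \<in> space M. X \<omega> \<in> {x0..x0 + e}}))"
  by (intro bdd_aboveI[of _ 1]) auto

lemma conc_le1: "conc M X e \<le> 1"
  unfolding conc_def by (intro cSUP_least) auto

lemma conc_ge: "measure M {\<omega> \<in> space M. X \<omega> \<in> {x0..x0 + e}} \<le> conc M X e"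
  unfolding conc_def by (rule cSUP_upper[OF _ conc_bdd]) auto

lemma conc_nonneg: "0 \<le> conc M X e"
  using conc_ge[of X 0 e] by (meson measure_nonneg order_trans)

lemma conc_mono:
  assumes X: "X \<in> borel_measurable M" shows "mono (conc M X)"
proof
  fix e e' :: real assume "e \<le> e'"
  show "conc M X e \<le> conc M X e'"
    unfolding conc_def
  proof (intro cSUP_mono[OF _ conc_bdd])
    fix x0 show "\<exists>m\<in>UNIV. measure M {\<omega> \<in> space M. X \<omega> \<in> {x0..x0 + e}} \<le> measure M {\<omega> \<in> space M. X \<omega> \<in> {m..m + e'}}"
    proof (rule bexI[of _ x0])
      show "measure M {\<omega> \<in> space M. X \<omega> \<in> {x0..x0 + e}} \<le> measure M {\<omega> \<in> space M. X \<omega> \<in> {x0..x0 + e'}}"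
      proof (rule finite_measure_mono)
        show "{\<omega> \<in> space M. X \<omega> \<in> {x0..x0 + e'}} \<in> events" using X by (intro evX) auto
        show "{\<omega> \<in> space M. X \<omega> \<in> {x0..x0 + e}} \<subseteq> {\<omega> \<in> space M. X \<omega> \<in> {x0..x0 + e'}}"
          using \<open>e \<le> e'\<close> by auto
      qed
    qed simp
  qed simp
qed

lemma conc_shift: "conc M (\<lambda>\<omega>. X \<omega> + k) = conc M X"
proof
  fix e
  have "conc M (\<lambda>\<omega>. X \<omega> + k) e = (SUP x0. measure M {\<omega> \<in> space M. X \<omega> \<in> {(x0-k)..(x0-k) + e}})"
    unfolding conc_def by (rule SUP_cong[OF refl], rule arg_cong[where f="measure M"]) auto
  also have "\<dots> = conc M X e" unfolding conc_def
    by (rule SUP_surj[where g="\<lambda>x0. measure M {\<omega> \<in> space M. X \<omega> \<in> {x0..x0 + e}}"])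
       (auto simp: surj_def intro!: exI[of _ "_ + k"])
  finally show "conc M (\<lambda>\<omega>. X \<omega> + k) e = conc M X e" .
qed


lemma conc_scale:
  assumes a: "a \<noteq> 0"
  shows "conc M (\<lambda>\<omega>. a * X \<omega>) (\<bar>a\<bar> * t) = conc M X t"
proof -
  define h where "h x0 = (if a > 0 then x0 / a else x0 / a - t)" for x0
  have "conc M (\<lambda>\<omega>. a * X \<omega>) (\<bar>a\<bar> * t) = (SUP x0. measure M {\<omega> \<in> space M. X \<omega> \<in> {h x0..h x0 + t}})"
    unfolding conc_def
  proof (rule SUP_cong[OF refl], rule arg_cong[where f="measure M"], rule Collect_cong, rule conj_cong[OF refl])
    fix x0 \<omega>
    show "(a * X \<omega> \<in> {x0..x0 + \<bar>a\<bar> * t}) = (X \<omega> \<in> {h x0..h x0 + t})"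
    proof (cases "a > 0")
      case True then show ?thesis by (auto simp: h_def field_simps)
    next
      case False then have "a < 0" using a by auto
      then show ?thesis by (auto simp: h_def field_simps)
    qed
  qed
  also have "\<dots> = conc M X t" unfolding conc_def
  proof (rule SUP_surj[where g="\<lambda>x0. measure M {\<omega> \<in> space M. X \<omega> \<in> {x0..x0 + t}}"])
    show "surj h" unfolding surj_def
    proof
      fix y show "\<exists>x. y = h x"
      proof (cases "a > 0")
        case True then show ?thesis unfolding h_def using a by (intro exI[of _ "a * y"]) auto
      next
        case False then show ?thesis unfolding h_def using a by (intro exI[of _ "a * (y + t)"]) auto
      qed
    qed
  qed
  finally show ?thesis .
qed

lemma conc_degen:
  assumes X: "X \<in> borel_measurable M" and ae: "AE \<omega> in M. X \<omega> = c" and e: "e \<ge> 0"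
  shows "conc M X e = 1"
proof (rule antisym[OF conc_le1])
  have ev: "{\<omega> \<in> space M. X \<omega> \<in> {c..c+e}} \<in> events" by (rule evX[OF X]) auto
  have "prob {\<omega> \<in> space M. X \<omega> \<in> {c..c+e}} = 1"
    using ae e ev by (subst prob_Collect_eq_1) (auto elim!: eventually_mono)
  then show "1 \<le> conc M X e" using conc_ge[of X c e] by simp
qed

end



definition Iq :: "real \<Rightarrow> (real \<Rightarrow> real) \<Rightarrow> ennreal" where
  "Iq r c = (\<integral>\<^sup>+ \<epsilon>. indicator {0<..} \<epsilon> * ennreal (\<epsilon> powr (r - 1) * (1 - c \<epsilon>)) \<partial>lborel)"

lemma nu_Iq: "nu r M X = ennreal (r powr (1 / r) / 2) * enn_root r (Iq r (conc M X))"
  by (simp add: nu_def Iq_def)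

lemma Iq_mono:
  assumes "\<And>e. e > 0 \<Longrightarrow> c2 e \<le> c1 e" shows "Iq r c1 \<le> Iq r c2"
  unfolding Iq_def
proof (rule nn_integral_mono)
  fix e :: real
  show "indicator {0<..} e * ennreal (e powr (r - 1) * (1 - c1 e)) \<le> indicator {0<..} e * ennreal (e powr (r - 1) * (1 - c2 e))"
  proof (cases "e > 0")
    case True
    then show ?thesis using assms[OF True]
      by (auto intro!: ennreal_leI mult_left_mono)
  qed simp
qed

lemma enn_root_mono:
  assumes "I \<le> J" "r > 0" shows "enn_root r I \<le> enn_root r J"
proof (cases "J = \<infinity>")
  case False
  then have "I \<noteq> \<infinity>" using assms(1) by (auto simp: top_unique)
  then show ?thesis using False assms
    by (auto simp: enn_root_def less_top[symmetric] intro!: ennreal_leI powr_mono2 enn2real_mono)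
qed (simp add: enn_root_def)

lemma enn_root_0[simp]: "enn_root r 0 = 0"
  by (simp add: enn_root_def)

lemma enn_root_mult:
  assumes s: "s > 0" and r: "r > 0"
  shows "enn_root r (ennreal s * I) = ennreal (s powr (1/r)) * enn_root r I"
proof (cases "I = \<infinity>")
  case True
  then show ?thesis using s by (simp add: enn_root_def ennreal_mult_top)
next
  case False
  then have "ennreal s * I \<noteq> \<infinity>" by (simp add: ennreal_mult_eq_top_iff)
  moreover have "enn2real (ennreal s * I) = s * enn2real I" using s by (simp add: enn2real_mult)
  ultimately show ?thesis using False s
    by (simp add: enn_root_def powr_mult ennreal_mult[symmetric])
qed

lemma Iq_one: assumes "\<And>e. e > 0 \<Longrightarrow> c e = 1" shows "Iq r c = 0"
proof -
  have "Iq r c = (\<integral>\<^sup>+ (\<epsilon>::real). 0 \<partial>lborel)" unfolding Iq_def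
    by (rule nn_integral_cong) (auto simp: assms indicator_def)
  then show ?thesis by simp
qed

lemma Iq_scale:
  assumes mono: "mono c'" and monoc: "mono c" and a: "a \<noteq> 0" and h: "\<And>t. t > 0 \<Longrightarrow> c' (\<bar>a\<bar> * t) = c t"
  shows "Iq r c' = ennreal (\<bar>a\<bar> powr r) * Iq r c"
proof -
  have [measurable]: "c' \<in> borel_measurable borel" using borel_measurable_mono[OF mono] .
  have [measurable]: "c \<in> borel_measurable borel" using borel_measurable_mono[OF monoc] .
  have aa: "\<bar>a\<bar> > 0" using a by simp
  have m: "(\<lambda>\<epsilon>::real. indicator {0<..} \<epsilon> * ennreal (\<epsilon> powr (r - 1) * (1 - c' \<epsilon>))) \<in> borel_measurable borel"
    by measurable
  have "Iq r c' = ennreal \<bar>a\<bar> * (\<integral>\<^sup>+ x. indicator {0<..} (\<bar>a\<bar> * x) * ennreal ((\<bar>a\<bar> * x) powr (r - 1) * (1 - c' (\<bar>a\<bar> * x))) \<partial>lborel)"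
    unfolding Iq_def using nn_integral_real_affine[OF m, of "\<bar>a\<bar>" 0] a by (simp only: add_0_left abs_eq_0 not_False_eq_True simp_thms abs_abs)
  also have "(\<integral>\<^sup>+ x. indicator {0<..} (\<bar>a\<bar> * x) * ennreal ((\<bar>a\<bar> * x) powr (r - 1) * (1 - c' (\<bar>a\<bar> * x))) \<partial>lborel)
      = (\<integral>\<^sup>+ x. ennreal (\<bar>a\<bar> powr (r - 1)) * (indicator {0<..} x * ennreal (x powr (r - 1) * (1 - c x))) \<partial>lborel)"
  proof (rule nn_integral_cong)
    fix x :: real
    show "indicator {0<..} (\<bar>a\<bar> * x) * ennreal ((\<bar>a\<bar> * x) powr (r - 1) * (1 - c' (\<bar>a\<bar> * x))) =
      ennreal (\<bar>a\<bar> powr (r - 1)) * (indicator {0<..} x * ennreal (x powr (r - 1) * (1 - c x)))"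
    proof (cases "x > 0")
      case True
      then have "0 < \<bar>a\<bar> * x" using aa by simp
      have "(\<bar>a\<bar> * x) powr (r - 1) * (1 - c' (\<bar>a\<bar> * x)) = \<bar>a\<bar> powr (r - 1) * (x powr (r - 1) * (1 - c x))"
        using h[OF True] aa True by (simp add: powr_mult)
      then show ?thesis using True \<open>0 < \<bar>a\<bar> * x\<close>
        by (simp add: ennreal_mult' indicator_def)
    next
      case False
      then have "\<not> 0 < \<bar>a\<bar> * x" using aa by (simp add: zero_less_mult_iff)
      then show ?thesis using False by simp
    qed
  qed
  also have "\<dots> = ennreal (\<bar>a\<bar> powr (r - 1)) * Iq r c"
    unfolding Iq_def by (rule nn_integral_cmult) measurable
  finally have "Iq r c' = ennreal \<bar>a\<bar> * ennreal (\<bar>a\<bar> powr (r - 1)) * Iq r c"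
    by (simp add: mult.assoc)
  also have "ennreal \<bar>a\<bar> * ennreal (\<bar>a\<bar> powr (r - 1)) = ennreal (\<bar>a\<bar> powr r)"
  proof -
    have "\<bar>a\<bar> * \<bar>a\<bar> powr (r - 1) = \<bar>a\<bar> powr r"
      using aa by (simp add: powr_mult_base)
    then show ?thesis by (simp add: ennreal_mult[symmetric])
  qed
  finally show ?thesis .
qed




lemma quantile_galois:
  assumes D: "real_distribution D" and u: "0 < u" "u < 1"
  shows "u \<le> cdf D x \<longleftrightarrow> quantile (cdf D) u \<le> x"
proof -
  interpret real_distribution D by (rule D)
  interpret right_continuous_mono "cdf D" 0 1
  proof
    show "\<And>x. continuous (at_right x) (cdf D)" by (rule cdf_is_right_cont)
    show "mono (cdf D)" by (simp add: mono_def cdf_nondecreasing)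
    show "(cdf D \<longlongrightarrow> 0) at_bot" by (rule cdf_lim_at_bot)
    show "(cdf D \<longlongrightarrow> 1) at_top" by (rule cdf_lim_at_top_prob)
  qed
  show ?thesis unfolding quantile_def using pseudoinverse[OF u] .
qed

lemma rd_measure_le1: "real_distribution D \<Longrightarrow> measure D A \<le> 1"
  by (simp add: prob_space.prob_le_1 real_distribution_def)

lemma disp_wd_dist:
  fixes D E :: "real measure"
  assumes D: "real_distribution D" and E: "real_distribution E"
    and disp: "\<forall>u v. 0 < u \<and> u < v \<and> v < 1 \<longrightarrow> quantile (cdf D) v - quantile (cdf D) u \<le> quantile (cdf E) v - quantile (cdf E) u"
    and e: "e > 0"
  shows "measure E {y0..y0+e} \<le> (SUP x0. measure D {x0..x0+e})"
proof -
  have bddD: "bdd_above (range (\<lambda>x0. measure D {x0..x0+e}))"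
    using rd_measure_le1[OF D] by (intro bdd_aboveI[of _ 1]) auto
  interpret E: real_distribution E by (rule E)
  interpret D: real_distribution D by (rule D)
  define F where "F = cdf D"
  define G where "G = cdf E"
  define qF where "qF = quantile F"
  define qG where "qG = quantile G"
  define a where "a = measure E {..<y0}"
  define b where "b = G (y0 + e)"
  have galF: "u \<le> F x \<longleftrightarrow> qF u \<le> x" if "0 < u" "u < 1" for u x
    unfolding F_def qF_def using quantile_galois[OF D that] .
  have galG: "u \<le> G x \<longleftrightarrow> qG u \<le> x" if "0 < u" "u < 1" for u x
    unfolding G_def qG_def using quantile_galois[OF E that] .
  have p: "measure E {y0..y0+e} = b - a"
  proof -
    have "{y0..y0+e} = {..y0+e} - {..<y0}" by auto
    then have "measure E {y0..y0+e} = measure E {..y0+e} - measure E {..<y0}"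
      proof -
        have sub: "{..<y0} \<subseteq> {..y0+e}" using e by auto
        have "measure E ({..y0+e} - {..<y0}) = measure E {..y0+e} - measure E {..<y0}"
          by (rule E.finite_measure_Diff) (simp_all add: sub)
        then show ?thesis using \<open>{y0..y0+e} = {..y0+e} - {..<y0}\<close> by simp
      qed
    then show ?thesis by (simp add: a_def b_def G_def cdf_def)
  qed
  show ?thesis
  proof (cases "b - a \<le> 0")
    case True
    have "0 \<le> measure D {0..0+e}" by simp
    also have "\<dots> \<le> (SUP x0. measure D {x0..x0+e})" by (rule cSUP_upper[OF _ bddD]) simp
    finally show ?thesis using True p by simp
  next
    case False
    then have ab: "a < b" by simp
    have a0: "0 \<le> a" by (simp add: a_def)
    have b1: "b \<le> 1" by (simp add: b_def G_def E.cdf_bounded_prob)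
    have u01: "0 < u \<and> u < 1" if "a < u" "u < b" for u using that a0 b1 by auto
    have gq: "y0 \<le> qG u \<and> qG u \<le> y0 + e" if "a < u" "u < b" for u
    proof
      show "qG u \<le> y0 + e" using galG[of u "y0+e"] u01[OF that] that by (simp add: b_def)
      show "y0 \<le> qG u"
      proof (rule ccontr)
        assume "\<not> y0 \<le> qG u"
        then have lt: "qG u < y0" by simp
        have "u \<le> G (qG u)" using galG[of u "qG u"] u01[OF that] by simp
        also have "G (qG u) = measure E {..qG u}" by (simp add: G_def cdf_def)
        also have "\<dots> \<le> measure E {..<y0}"
        proof (rule E.finite_measure_mono)
          show "{..qG u} \<subseteq> {..<y0}" using lt by auto
        qed simp
        finally show False using that by (simp add: a_def)
      qed
    qed
    have fdiff: "qF v - qF u \<le> e" if "a < u" "u < v" "v < b" for u v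
    proof -
      have "qF v - qF u \<le> qG v - qG u"
        using disp u01[of u] u01[of v] that unfolding qF_def qG_def F_def G_def by auto
      also have "\<dots> \<le> e" using gq[of u] gq[of v] that by auto
      finally show ?thesis .
    qed
    have qFmono: "qF u \<le> qF v" if "a < u" "u \<le> v" "v < b" for u v
    proof -
      have "v \<le> F (qF v)" using galF[of v "qF v"] u01[of v] that by simp
      then have "u \<le> F (qF v)" using that by simp
      then show ?thesis using galF[of u "qF v"] u01[of u] that by simp
    qed
    define w where "w = (a + b) / 2"
    have w: "a < w" "w < b" using ab by (auto simp: w_def)
    define S where "S = qF ` {a<..<b}"
    have Sne: "S \<noteq> {}" using w by (auto simp: S_def)
    have bddS: "bdd_below S"
    proof (rule bdd_belowI[of _ "qF w - e"])
      fix s assume "s \<in> S"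
      then obtain u where u: "a < u" "u < b" "s = qF u" by (auto simp: S_def)
      show "qF w - e \<le> s"
      proof (cases "u < w")
        case True then show ?thesis using fdiff[of u w] u w by auto
      next
        case False then show ?thesis using qFmono[of w u] u w e by auto
      qed
    qed
    define x0 where "x0 = Inf S"
    have c1: "qF u \<le> x0 + e" if u: "a < u" "u < b" for u
    proof (rule ccontr)
      assume "\<not> qF u \<le> x0 + e"
      then have "Inf S < qF u - e" by (simp add: x0_def)
      then obtain s where "s \<in> S" "s < qF u - e" using cInf_lessD[OF Sne] by blast
      then obtain w' where w': "a < w'" "w' < b" "s = qF w'" by (auto simp: S_def)
      show False
      proof (cases "w' < u")
        case True then show ?thesis using fdiff[of w' u] w' u \<open>s < qF u - e\<close> by auto
      next
        case False then show ?thesis using qFmono[of u w'] w' u \<open>s < qF u - e\<close> e by auto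
      qed
    qed
    have bF: "b \<le> F (x0 + e)"
    proof (rule dense_le_bounded[OF ab])
      fix u assume "a < u" "u < b"
      then show "u \<le> F (x0 + e)" using galF[of u "x0 + e"] u01[of u] c1[of u] by auto
    qed
    have aF: "measure D {..<x0} \<le> a"
    proof (rule dense_ge_bounded[OF ab])
      fix u assume u: "a < u" "u < b"
      have lim: "(F \<longlongrightarrow> measure D {..<x0}) (at_left x0)" unfolding F_def by (rule D.cdf_at_left)
      have ev: "eventually (\<lambda>y. F y \<le> u) (at_left x0)"
      proof (rule eventually_at_leftI[of "x0 - 1"])
        fix y assume "y \<in> {x0 - 1<..<x0}"
        then have "y < x0" by simp
        moreover have "x0 \<le> qF u" unfolding x0_def S_def
          using bddS u unfolding S_def by (intro cInf_lower) auto
        ultimately have "\<not> qF u \<le> y" by simp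
        then show "F y \<le> u" using galF[of u y] u01[OF u] by simp
      qed simp
      show "measure D {..<x0} \<le> u"
        by (rule tendsto_upperbound[OF lim ev]) simp
    qed
    have "measure D {x0..x0+e} = F (x0 + e) - measure D {..<x0}"
    proof -
      have "{x0..x0+e} = {..x0+e} - {..<x0}" by auto
      then have "measure D {x0..x0+e} = measure D {..x0+e} - measure D {..<x0}"
        proof -
        have sub: "{..<x0} \<subseteq> {..x0+e}" using e by auto
        have "measure D ({..x0+e} - {..<x0}) = measure D {..x0+e} - measure D {..<x0}"
          by (rule D.finite_measure_Diff) (simp_all add: sub)
        then show ?thesis using \<open>{x0..x0+e} = {..x0+e} - {..<x0}\<close> by simp
      qed
      then show ?thesis by (simp add: F_def cdf_def)
    qed
    then have "measure E {y0..y0+e} \<le> measure D {x0..x0+e}" using p bF aF by simp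
    also have "\<dots> \<le> (SUP x0. measure D {x0..x0+e})" by (rule cSUP_upper[OF _ bddD]) simp
    finally show ?thesis .
  qed
qed




context prob_space begin

lemma conc_nat_step:
  assumes X: "X \<in> borel_measurable M" and N: "AE \<omega> in M. X \<omega> \<in> \<nat>"
    and k: "real k \<le> e" "e < real k + 1"
  shows "conc M X e = conc M X (real k)"
proof (rule antisym)
  show "conc M X (real k) \<le> conc M X e" using conc_mono[OF X] k(1) by (simp add: mono_def)
  show "conc M X e \<le> conc M X (real k)"
    unfolding conc_def[of M X e]
  proof (rule cSUP_least)
    fix x0 :: real
    define j where "j = real_of_int \<lceil>x0\<rceil>"
    have "prob {\<omega> \<in> space M. X \<omega> \<in> {x0..x0 + e}} \<le> prob {\<omega> \<in> space M. X \<omega> \<in> {j..j + real k}}"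
    proof (rule finite_measure_mono_AE)
      show "{\<omega> \<in> space M. X \<omega> \<in> {j..j + real k}} \<in> events" by (rule evX[OF X]) simp
      show "AE \<omega> in M. \<omega> \<in> {\<omega> \<in> space M. X \<omega> \<in> {x0..x0 + e}} \<longrightarrow> \<omega> \<in> {\<omega> \<in> space M. X \<omega> \<in> {j..j + real k}}"
        using N
      proof (rule eventually_mono)
        fix \<omega> assume "X \<omega> \<in> \<nat>"
        then obtain n :: nat where n: "X \<omega> = real n" by (auto elim: Nats_cases)
        show "\<omega> \<in> {\<omega> \<in> space M. X \<omega> \<in> {x0..x0 + e}} \<longrightarrow> \<omega> \<in> {\<omega> \<in> space M. X \<omega> \<in> {j..j + real k}}"
        proof
          assume "\<omega> \<in> {\<omega> \<in> space M. X \<omega> \<in> {x0..x0 + e}}"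
          then have w: "\<omega> \<in> space M" "x0 \<le> real n" "real n \<le> x0 + e" using n by auto
          have "\<lceil>x0\<rceil> \<le> int n" using w(2) by (simp add: ceiling_le_iff)
          moreover have "int n < \<lceil>x0\<rceil> + int k + 1"
          proof -
            have "real n < x0 + real k + 1" using w(3) k by simp
            also have "\<dots> \<le> real_of_int \<lceil>x0\<rceil> + real k + 1" by simp
            finally show ?thesis by linarith
          qed
          ultimately show "\<omega> \<in> {\<omega> \<in> space M. X \<omega> \<in> {j..j + real k}}"
            using w n unfolding j_def by auto
        qed
      qed
    qed
    also have "\<dots> \<le> conc M X (real k)" by (rule conc_ge)
    finally show "prob {\<omega> \<in> space M. X \<omega> \<in> {x0..x0 + e}} \<le> conc M X (real k)" .
  qed simp
qed

lemma conc_nat_zero: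
  assumes X: "X \<in> borel_measurable M" and N: "AE \<omega> in M. X \<omega> \<in> \<nat>"
  shows "conc M X 0 = (SUP j::nat. measure M {\<omega> \<in> space M. X \<omega> = real j})"
proof -
  have bdd: "bdd_above (range (\<lambda>j::nat. measure M {\<omega> \<in> space M. X \<omega> = real j}))"
    by (intro bdd_aboveI[of _ 1]) auto
  have nn: "0 \<le> (SUP j::nat. measure M {\<omega> \<in> space M. X \<omega> = real j})"
    using cSUP_upper[OF _ bdd, of 0] by (meson UNIV_I measure_nonneg order_trans)
  show ?thesis
  proof (rule antisym)
    show "conc M X 0 \<le> (SUP j::nat. measure M {\<omega> \<in> space M. X \<omega> = real j})"
      unfolding conc_def
    proof (rule cSUP_least)
      fix x0 :: real
      show "prob {\<omega> \<in> space M. X \<omega> \<in> {x0..x0 + 0}} \<le> (SUP j::nat. measure M {\<omega> \<in> space M. X \<omega> = real j})"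
      proof (cases "x0 \<in> \<nat>")
        case True
        then obtain j :: nat where j: "x0 = real j" by (auto elim: Nats_cases)
        have "{\<omega> \<in> space M. X \<omega> \<in> {x0..x0 + 0}} = {\<omega> \<in> space M. X \<omega> = real j}" using j by auto
        then show ?thesis using cSUP_upper[OF _ bdd, of j] by simp
      next
        case False
        have "prob {\<omega> \<in> space M. X \<omega> \<in> {x0..x0 + 0}} = 0"
        proof (rule prob_eq_0_AE)
          show "AE \<omega> in M. \<not> X \<omega> \<in> {x0..x0 + 0}"
            using N by (rule eventually_mono) (use False in auto)
        qed
        then show ?thesis using nn by simp
      qed
    qed simp
    show "(SUP j::nat. measure M {\<omega> \<in> space M. X \<omega> = real j}) \<le> conc M X 0"
    proof (rule cSUP_least)
      fix j :: nat
      have "{\<omega> \<in> space M. X \<omega> = real j} = {\<omega> \<in> space M. X \<omega> \<in> {real j..real j + 0}}" by auto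
      then show "measure M {\<omega> \<in> space M. X \<omega> = real j} \<le> conc M X 0" using conc_ge[of X "real j" 0] by simp
    qed simp
  qed
qed

end




lemma powr_piece_integral:
  assumes r: "r \<ge> 1"
  shows "(\<integral>\<^sup>+ x. ennreal (x powr (r - 1)) * indicator {real k..real k + 1} x \<partial>lborel)
    = ennreal (((real k + 1) powr r - real k powr r) / r)"
proof -
  have rpos: "r > 0" using r by simp
  have "((\<lambda>x. x powr (r - 1)) has_integral ((real k + 1) powr r / r - real k powr r / r)) {real k..real k + 1}"
  proof (rule fundamental_theorem_of_calculus_interior)
    show "real k \<le> real k + 1" by simp
    show "continuous_on {real k..real k + 1} (\<lambda>x. x powr r / r)"
      by (intro continuous_intros continuous_on_powr') (use rpos in auto)
    fix x assume x: "x \<in> {real k<..<real k + 1}"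
    then have "x > 0" by (smt (verit) greaterThanLessThan_iff of_nat_0_le_iff)
    have "((\<lambda>x. x powr r / r) has_real_derivative (r * x powr (r - 1)) / r) (at x)"
      by (intro DERIV_cdivide has_real_derivative_powr \<open>x > 0\<close>)
    then have "((\<lambda>x. x powr r / r) has_real_derivative x powr (r - 1)) (at x)"
      using rpos by simp
    then show "((\<lambda>x. x powr r / r) has_vector_derivative x powr (r - 1)) (at x)"
      by (simp add: has_real_derivative_iff_has_vector_derivative)
  qed
  then have "((\<lambda>x. x powr (r - 1)) has_integral (((real k + 1) powr r - real k powr r) / r)) {real k..real k + 1}"
    by (simp add: diff_divide_distrib)
  from nn_integral_has_integral_lebesgue'[OF _ this] show ?thesis by simp
qed

lemma Iq_nat:
  assumes r: "r \<ge> 1" and mono: "mono c"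
    and step: "\<And>k e. real k \<le> e \<Longrightarrow> e < real k + 1 \<Longrightarrow> c e = c (real k)"
    and le1: "\<And>e. c e \<le> 1"
  shows "ennreal r * Iq r c = (\<Sum>k. ennreal (((real k + 1) powr r - real k powr r) * (1 - c (real k))))"
proof -
  have rpos: "r > 0" using r by simp
  have [measurable]: "c \<in> borel_measurable borel" using borel_measurable_mono[OF mono] .
  define f where "f \<epsilon> = indicator {0<..} \<epsilon> * ennreal (\<epsilon> powr (r - 1) * (1 - c \<epsilon>))" for \<epsilon> :: real
  have fm[measurable]: "f \<in> borel_measurable lborel" unfolding f_def by measurable
  define B where "B k = {real k..<real k + 1}" for k :: nat
  have Bm[measurable]: "B k \<in> sets lborel" for k by (simp add: B_def)
  have disj: "disjoint_family B"
    unfolding disjoint_family_on_def B_def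
  proof (intro ballI impI)
    fix m n :: nat assume "m \<noteq> n"
    then show "{real m..<real m + 1} \<inter> {real n..<real n + 1} = {}"
      by (cases "m < n") auto
  qed
  have "Iq r c = (\<integral>\<^sup>+ \<epsilon>. f \<epsilon> \<partial>lborel)" by (simp add: Iq_def f_def)
  also have "\<dots> = (\<integral>\<^sup>+ \<epsilon> \<in> (\<Union>k. B k). f \<epsilon> \<partial>lborel)"
  proof (rule nn_integral_cong)
    fix \<epsilon> :: real
    show "f \<epsilon> = f \<epsilon> * indicator (\<Union>k. B k) \<epsilon>"
    proof (cases "\<epsilon> > 0")
      case True
      have h: "real (nat \<lfloor>\<epsilon>\<rfloor>) = real_of_int \<lfloor>\<epsilon>\<rfloor>" using True by simp
      have "\<epsilon> \<in> B (nat \<lfloor>\<epsilon>\<rfloor>)" unfolding B_def atLeastLessThan_iff h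
        using floor_correct[of \<epsilon>] by simp
      then show ?thesis by (auto simp: indicator_def)
    qed (simp add: f_def)
  qed
  also have "\<dots> = (\<Sum>k. (\<integral>\<^sup>+ \<epsilon> \<in> B k. f \<epsilon> \<partial>lborel))"
    by (rule nn_integral_disjoint_family[OF fm Bm disj])
  also have "\<dots> = (\<Sum>k. ennreal (((real k + 1) powr r - real k powr r) / r) * ennreal (1 - c (real k)))"
  proof (rule suminf_cong)
    fix k :: nat
    have "(\<integral>\<^sup>+ \<epsilon> \<in> B k. f \<epsilon> \<partial>lborel) = (\<integral>\<^sup>+ x. ennreal (x powr (r - 1)) * indicator {real k..real k + 1} x * ennreal (1 - c (real k)) \<partial>lborel)"
    proof (rule nn_integral_cong_AE)
      show "AE x in lborel. f x * indicator (B k) x = ennreal (x powr (r - 1)) * indicator {real k..real k + 1} x * ennreal (1 - c (real k))"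
        using AE_lborel_singleton[of "real k + 1"]
      proof (rule eventually_mono)
        fix x :: real assume ne: "x \<noteq> real k + 1"
        show "f x * indicator (B k) x = ennreal (x powr (r - 1)) * indicator {real k..real k + 1} x * ennreal (1 - c (real k))"
        proof (cases "x \<in> B k")
          case True
          then have x: "real k \<le> x" "x < real k + 1" by (auto simp: B_def)
          have ck: "c x = c (real k)" using step[OF x] .
          have "f x = ennreal (x powr (r - 1)) * ennreal (1 - c (real k))"
          proof (cases "x > 0")
            case True then show ?thesis using ck le1[of "real k"] by (simp add: f_def ennreal_mult)
          next
            case False then have "x = 0" using x by simp
            then show ?thesis by (simp add: f_def)
          qed
          then show ?thesis using True x by (simp add: indicator_def)
        next
          case False
          then have "x \<notin> {real k..real k + 1}" using ne by (auto simp: B_def)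
          then show ?thesis using False by simp
        qed
      qed
    qed
    also have "\<dots> = (\<integral>\<^sup>+ x. ennreal (x powr (r - 1)) * indicator {real k..real k + 1} x \<partial>lborel) * ennreal (1 - c (real k))"
      by (rule nn_integral_multc) measurable
    also have "\<dots> = ennreal (((real k + 1) powr r - real k powr r) / r) * ennreal (1 - c (real k))"
      by (simp only: powr_piece_integral[OF r])
    finally show "(\<integral>\<^sup>+ \<epsilon> \<in> B k. f \<epsilon> \<partial>lborel) = ennreal (((real k + 1) powr r - real k powr r) / r) * ennreal (1 - c (real k))" .
  qed
  finally have I: "Iq r c = (\<Sum>k. ennreal (((real k + 1) powr r - real k powr r) / r) * ennreal (1 - c (real k)))" .
  have "ennreal r * Iq r c = (\<Sum>k. ennreal r * (ennreal (((real k + 1) powr r - real k powr r) / r) * ennreal (1 - c (real k))))"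
    unfolding I by simp
  also have "\<dots> = (\<Sum>k. ennreal (((real k + 1) powr r - real k powr r) * (1 - c (real k))))"
  proof (rule suminf_cong)
    fix k :: nat
    have A: "0 \<le> (real k + 1) powr r - real k powr r" using rpos by (simp add: powr_mono2)
    have C: "0 \<le> 1 - c (real k)" using le1[of "real k"] by simp
    define A where "A = (real k + 1) powr r - real k powr r"
    have A0: "0 \<le> A" using A by (simp add: A_def)
    have rA: "ennreal r * ennreal (A / r) = ennreal A"
      using rpos A0 ennreal_mult[of r "A / r"] by simp
    have "ennreal r * (ennreal (A / r) * ennreal (1 - c (real k))) = ennreal A * ennreal (1 - c (real k))"
      by (simp add: mult.assoc[symmetric] rA)
    also have "\<dots> = ennreal (A * (1 - c (real k)))" using A0 C by (simp add: ennreal_mult)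
    finally show "ennreal r * (ennreal (((real k + 1) powr r - real k powr r) / r) * ennreal (1 - c (real k)))
      = ennreal (((real k + 1) powr r - real k powr r) * (1 - c (real k)))" by (simp add: A_def)
  qed
  finally show ?thesis .
qed




theorem mainTheorem15:
  fixes r :: real and M :: "'a measure" and X :: "'a \<Rightarrow> real"
    and N :: "'b measure" and Y :: "'b \<Rightarrow> real"
  assumes r: "r \<ge> 1"
    and M: "prob_space M" and X: "X \<in> borel_measurable M"
    and N: "prob_space N" and Y: "Y \<in> borel_measurable N"
  shows "(distr M borel X = distr N borel Y \<longrightarrow> nu r M X = nu r N Y)
    \<and> (\<forall>k::real. nu r M (\<lambda>\<omega>. X \<omega> + k) = nu r M X)
    \<and> (\<forall>a::real. nu r M (\<lambda>\<omega>. a * X \<omega>) = ennreal \<bar>a\<bar> * nu r M X)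
    \<and> nu r M X \<ge> 0
    \<and> ((\<exists>c::real. AE \<omega> in M. X \<omega> = c) \<longrightarrow> nu r M X = 0)
    \<and> (wd_le M X N Y \<longrightarrow> nu r M X \<le> nu r N Y)
    \<and> (disp_le M X N Y \<longrightarrow> nu r M X \<le> nu r N Y)
    \<and> ((AE \<omega> in M. X \<omega> \<in> \<nat>) \<longrightarrow>
         nu r M X = ennreal (1 / 2) * enn_root r
           (\<Sum>k::nat. ennreal (((real k + 1) powr r - real k powr r) *
              (1 - (if k = 0 then (SUP j::nat. measure M {\<omega> \<in> space M. X \<omega> = real j})
                    else conc M X (real k))))))"
proof -
  interpret M: prob_space M by (rule M)
  interpret N: prob_space N by (rule N)
  have rpos: "r > 0" using r by simp
  define K where "K = ennreal (r powr (1 / r) / 2)"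
  have nuK: "nu r P Z = K * enn_root r (Iq r (conc P Z))" for P :: "'c measure" and Z
    by (simp add: nu_Iq K_def)
  have zero_of: "nu r M Z = 0" if Z: "Z \<in> borel_measurable M" and ae: "AE \<omega> in M. Z \<omega> = c" for Z c
  proof -
    have "Iq r (conc M Z) = 0"
      by (rule Iq_one) (rule M.conc_degen[OF Z ae], simp)
    then show ?thesis by (simp add: nuK)
  qed
  have P1: "distr M borel X = distr N borel Y \<longrightarrow> nu r M X = nu r N Y"
  proof
    assume eq: "distr M borel X = distr N borel Y"
    have "conc M X = conc N Y"
      by (rule ext) (simp add: conc_distr[OF X] conc_distr[OF Y] eq)
    then show "nu r M X = nu r N Y" by (simp add: nuK)
  qed
  have P2: "\<forall>k::real. nu r M (\<lambda>\<omega>. X \<omega> + k) = nu r M X"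
    by (simp add: nuK M.conc_shift)
  have P3: "\<forall>a::real. nu r M (\<lambda>\<omega>. a * X \<omega>) = ennreal \<bar>a\<bar> * nu r M X"
  proof
    fix a :: real
    show "nu r M (\<lambda>\<omega>. a * X \<omega>) = ennreal \<bar>a\<bar> * nu r M X"
    proof (cases "a = 0")
      case True
      have "nu r M (\<lambda>\<omega>. a * X \<omega>) = 0"
        by (rule zero_of[of _ 0]) (use True in auto)
      then show ?thesis using True by simp
    next
      case False
      have aX: "(\<lambda>\<omega>. a * X \<omega>) \<in> borel_measurable M" using X by measurable
      have aa: "\<bar>a\<bar> powr r > 0" using False by simp
      have "Iq r (conc M (\<lambda>\<omega>. a * X \<omega>)) = ennreal (\<bar>a\<bar> powr r) * Iq r (conc M X)"
        by (rule Iq_scale[OF M.conc_mono[OF aX] M.conc_mono[OF X] False M.conc_scale[OF False]])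
      then have "enn_root r (Iq r (conc M (\<lambda>\<omega>. a * X \<omega>))) = ennreal ((\<bar>a\<bar> powr r) powr (1 / r)) * enn_root r (Iq r (conc M X))"
        using enn_root_mult[OF aa rpos] by simp
      also have "(\<bar>a\<bar> powr r) powr (1 / r) = \<bar>a\<bar>"
        using rpos False by (simp add: powr_powr)
      finally show ?thesis by (simp add: nuK ac_simps)
    qed
  qed
  have P5: "(\<exists>c::real. AE \<omega> in M. X \<omega> = c) \<longrightarrow> nu r M X = 0"
    using zero_of[OF X] by blast
  have P6: "wd_le M X N Y \<longrightarrow> nu r M X \<le> nu r N Y"
  proof
    assume "wd_le M X N Y"
    then have "Iq r (conc M X) \<le> Iq r (conc N Y)"
      unfolding wd_le_def by (intro Iq_mono) auto
    then show "nu r M X \<le> nu r N Y"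
      unfolding nuK by (intro mult_left_mono enn_root_mono rpos) auto
  qed
  have P7: "disp_le M X N Y \<longrightarrow> nu r M X \<le> nu r N Y"
  proof
    assume d: "disp_le M X N Y"
    have "wd_le M X N Y" unfolding wd_le_def
    proof (intro allI impI)
      fix e :: real assume e: "e > 0"
      show "conc N Y e \<le> conc M X e"
        unfolding conc_distr[OF X] conc_distr[OF Y]
      proof (rule cSUP_least)
        fix y0
        show "measure (distr N borel Y) {y0..y0 + e} \<le> (SUP x0. measure (distr M borel X) {x0..x0 + e})"
          by (rule disp_wd_dist[OF M.real_distribution_distr[OF X] N.real_distribution_distr[OF Y] _ e])
             (use d in \<open>simp add: disp_le_def\<close>)
      qed simp
    qed
    then show "nu r M X \<le> nu r N Y" using P6 by blast
  qed
  have P8: "(AE \<omega> in M. X \<omega> \<in> \<nat>) \<longrightarrow>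
         nu r M X = ennreal (1 / 2) * enn_root r
           (\<Sum>k::nat. ennreal (((real k + 1) powr r - real k powr r) *
              (1 - (if k = 0 then (SUP j::nat. measure M {\<omega> \<in> space M. X \<omega> = real j})
                    else conc M X (real k)))))"
  proof
    assume Nat: "AE \<omega> in M. X \<omega> \<in> \<nat>"
    have ifeq: "(if k = 0 then (SUP j::nat. measure M {\<omega> \<in> space M. X \<omega> = real j}) else conc M X (real k))
        = conc M X (real k)" for k :: nat
      using M.conc_nat_zero[OF X Nat] by simp
    have S: "(\<Sum>k::nat. ennreal (((real k + 1) powr r - real k powr r) *
              (1 - (if k = 0 then (SUP j::nat. measure M {\<omega> \<in> space M. X \<omega> = real j})
                    else conc M X (real k))))) = ennreal r * Iq r (conc M X)"
      unfolding ifeq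
      by (rule Iq_nat[OF r M.conc_mono[OF X] M.conc_nat_step[OF X Nat] M.conc_le1, symmetric])
    have "ennreal (1 / 2) * enn_root r (ennreal r * Iq r (conc M X))
        = ennreal (1 / 2) * (ennreal (r powr (1 / r)) * enn_root r (Iq r (conc M X)))"
      by (simp add: enn_root_mult[OF rpos rpos])
    also have "\<dots> = (ennreal (1 / 2) * ennreal (r powr (1 / r))) * enn_root r (Iq r (conc M X))"
      by (simp only: mult.assoc)
    also have "ennreal (1 / 2) * ennreal (r powr (1 / r)) = K"
      unfolding K_def by (subst ennreal_mult[symmetric]) auto
    also have "K * enn_root r (Iq r (conc M X)) = nu r M X" by (simp add: nuK)
    finally show "nu r M X = ennreal (1 / 2) * enn_root r
           (\<Sum>k::nat. ennreal (((real k + 1) powr r - real k powr r) *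
              (1 - (if k = 0 then (SUP j::nat. measure M {\<omega> \<in> space M. X \<omega> = real j})
                    else conc M X (real k)))))" unfolding S by simp
  qed
  show ?thesis using P1 P2 P3 P5 P6 P7 P8 by simp
qed


end
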